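(* Let $q$ be a prime power and let $n\ge 3$ be an odd integer. Let $f(x)$ be an irreducible monic polynomial of degree $n$ over $\mathbb{F}_{q^2}$. The following are equivalent: (1) $f(x)$ is self-conjugate-reciprocal; (2) $\mathrm{ord}(f(x))\in D_n$; (3) $f(x)=f_\beta(x):=\prod_{i=0}^{n-1}(x-\beta^{q^{2i}})$ for some primitive $d$-th root of unity $\beta$ with $d\in D_n$.
   Context: $D_n$ denotes the set of all positive divisors of $q^n+1$ that do not divide $q^k+1$ for any integer $0\le k<n$. For $f(x)\in\mathbb{F}_{q^2}[x]$ of degree $m$ with $f(0)\neq0$, the reciprocal is $f^*(x)=x^m f(0)^{-1}f(1/x)$, the conjugate of $g(x)=\sum g_ix^i$ is $\overline{g(x)}=\sum g_i^q x^i$, and the conjugate-reciprocal is $f^\dagger(x)=\overline{f^*(x)}$; $f$ is self-conjugate-reciprocal if $f=f^\dagger$. The order $\mathrm{ord}(f(x))$ is the smallest positive integer $s$ such that $f(x)$ divides $x^s-1$. *)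

theory Defs
  imports "HOL-Computational_Algebra.Computational_Algebra"
begin

definition Dset :: "nat \<Rightarrow> nat \<Rightarrow> nat set" where
  "Dset q n = {d. d > 0 \<and> d dvd q ^ n + 1 \<and> (\<forall>k<n. \<not> d dvd q ^ k + 1)}"

definition prime_power :: "nat \<Rightarrow> bool" where
  "prime_power q \<longleftrightarrow> (\<exists>p k. prime p \<and> k > 0 \<and> q = p ^ k)"

text \<open>Reciprocal f^*(x) = x^m f(0)^{-1} f(1/x) (for f(0) nonzero).\<close>
definition recip_poly :: "'a::field poly \<Rightarrow> 'a poly" where
  "recip_poly f = smult (inverse (coeff f 0)) (reflect_poly f)"

definition conj_poly :: "nat \<Rightarrow> 'a::field poly \<Rightarrow> 'a poly" where
  "conj_poly q g = map_poly (\<lambda>c. c ^ q) g"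

definition conj_recip :: "nat \<Rightarrow> 'a::field poly \<Rightarrow> 'a poly" where
  "conj_recip q f = conj_poly q (recip_poly f)"

definition self_conj_recip :: "nat \<Rightarrow> 'a::field poly \<Rightarrow> bool" where
  "self_conj_recip q f \<longleftrightarrow> f = conj_recip q f"

definition poly_ord :: "'a::field poly \<Rightarrow> nat" where
  "poly_ord f = (LEAST s. s > 0 \<and> f dvd (monom 1 s - 1))"

definition primitive_root_of_unity :: "nat \<Rightarrow> 'a::field \<Rightarrow> bool" where
  "primitive_root_of_unity d b \<longleftrightarrow> d > 0 \<and> b ^ d = 1 \<and> (\<forall>k. 0 < k \<and> k < d \<longrightarrow> b ^ k \<noteq> 1)"

definition f_beta :: "nat \<Rightarrow> nat \<Rightarrow> 'b::field \<Rightarrow> 'b poly" where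
  "f_beta q n b = (\<Prod>i<n. [:- (b ^ (q ^ (2 * i))), 1:])"

end

theory Submission
  imports Defs
begin


lemma card_of_nat_zero: "of_nat (card (UNIV::'c::{ring_1,finite} set)) = (0::'c)"
proof -
  have "(\<Sum>y\<in>(UNIV::'c set). y + 1) = (\<Sum>y\<in>UNIV. y)"
    by (rule sum.reindex_bij_witness[of _ "\<lambda>y. y - 1" "\<lambda>y. y + 1"]) auto
  then show ?thesis by (simp add: sum.distrib)
qed

lemma char_eq_prime:
  assumes p: "prime (p::nat)" and c: "card (UNIV::'c::{field,finite} set) = p ^ e" and e: "e > 0"
  shows "CHAR('c) = p"
proof -
  have pos: "CHAR('c) > 0" by (rule finite_imp_CHAR_pos) simp
  have pr: "prime CHAR('c)" by (rule prime_CHAR_semidom[OF pos])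
  have "CHAR('c) dvd p ^ e"
  proof -
    have "of_nat (p ^ e) = (0::'c)" using card_of_nat_zero[where 'c='c] c by simp
    then show ?thesis by (metis of_nat_eq_0_iff_char_dvd)
  qed
  then have "CHAR('c) dvd p" using pr prime_dvd_power by blast
  then show ?thesis using pr p primes_dvd_imp_eq by blast
qed

lemma frob_add:
  assumes p: "prime (p::nat)" and c: "card (UNIV::'c::{field,finite} set) = p ^ e" and e: "e > 0"
  shows "((x::'c) + y) ^ (p ^ j) = x ^ (p ^ j) + y ^ (p ^ j)"
proof -
  have "CHAR('c) = p" by (rule char_eq_prime[OF p c e])
  then show ?thesis using p freshmans_dream'[of "p^j" j x y] by simp
qed

lemma frob_sum:
  assumes p: "prime (p::nat)" and c: "card (UNIV::'c::{field,finite} set) = p ^ e" and e: "e > 0"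
  shows "(\<Sum>i\<in>A. (g i::'c)) ^ (p ^ j) = (\<Sum>i\<in>A. g i ^ (p ^ j))"
proof -
  have "CHAR('c) = p" by (rule char_eq_prime[OF p c e])
  then show ?thesis using p freshmans_dream_sum'[of "p^j" j g A] by simp
qed

lemma fermat_card:
  fixes x :: "'c::{field,finite}"
  shows "x ^ card (UNIV::'c set) = x"
proof (cases "x = 0")
  case False
  have "x * (\<Prod>y\<in>UNIV-{0}. x * y) = x * x ^ (card (UNIV :: 'c set) - 1) * \<Prod>(UNIV-{0})"
    by (simp add: prod.distrib mult_ac)
  also have "x * x ^ (card (UNIV :: 'c set) - 1) = x ^ Suc (card (UNIV :: 'c set) - 1)"
    by (subst power_Suc) auto
  also have "Suc (card (UNIV :: 'c set) - 1) = card (UNIV :: 'c set)"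
    using finite_UNIV_card_ge_0[where ?'a = 'c] by simp
  also have "(\<Prod>y\<in>UNIV-{0}. x * y) = (\<Prod>y\<in>UNIV-{0}. y)"
    by (rule prod.reindex_bij_witness[of _ "\<lambda>y. y / x" "\<lambda>y. x * y"]) (use False in auto)
  finally show ?thesis
    by simp
qed (use finite_UNIV_card_ge_0[where ?'a = 'c] in auto)

lemma fermat_card_pow:
  fixes x :: "'c::{field,finite}"
  shows "x ^ (card (UNIV::'c set) ^ k) = x"
  by (induction k) (simp_all add: fermat_card power_mult)

lemma pow_inj_frob:
  assumes p: "prime (p::nat)" and c: "card (UNIV::'c::{field,finite} set) = p ^ e" and e: "e > 0"
    and eq: "(x::'c) ^ (p ^ j) = y ^ (p ^ j)"
  shows "x = y"
proof -
  have "x ^ (p^j) = (x - y) ^ (p^j) + y ^ (p^j)"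
    using frob_add[OF p c e, of "x - y" y j] by simp
  then have "(x - y) ^ (p^j) = 0" using eq by simp
  then show ?thesis by simp
qed

locale fhom =
  fixes \<phi> :: "'a::field \<Rightarrow> 'b::field"
  assumes add: "\<forall>x y. \<phi> (x + y) = \<phi> x + \<phi> y"
    and mult: "\<forall>x y. \<phi> (x * y) = \<phi> x * \<phi> y"
    and one: "\<phi> 1 = 1"
begin

lemma add' [simp]: "\<phi> (x + y) = \<phi> x + \<phi> y" using add by blast
lemma mult' [simp]: "\<phi> (x * y) = \<phi> x * \<phi> y" using mult by blast
lemma zero [simp]: "\<phi> 0 = 0"
proof -
  have "\<phi> 0 + \<phi> 0 = \<phi> 0 + 0" using add'[of 0 0] by simp
  then show ?thesis by (simp only: add_left_cancel)
qed
lemma uminus [simp]: "\<phi> (- x) = - \<phi> x"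
proof -
  have "\<phi> x + \<phi> (-x) = 0" using add'[of x "-x"] by simp
  then show ?thesis by (metis neg_eq_iff_add_eq_0)
qed
lemma diff [simp]: "\<phi> (x - y) = \<phi> x - \<phi> y"
  using add'[of x "-y"] by simp
lemma one' [simp]: "\<phi> 1 = 1" by (rule one)
lemma power [simp]: "\<phi> (x ^ k) = \<phi> x ^ k"
  by (induction k) simp_all
lemma sum [simp]: "\<phi> (sum g A) = (\<Sum>i\<in>A. \<phi> (g i))"
  by (induction A rule: infinite_finite_induct) simp_all
lemma prod [simp]: "\<phi> (prod g A) = (\<Prod>i\<in>A. \<phi> (g i))"
  by (induction A rule: infinite_finite_induct) simp_all
lemma nz: "x \<noteq> 0 \<Longrightarrow> \<phi> x \<noteq> 0"
proof
  assume "x \<noteq> 0" "\<phi> x = 0"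
  then have "\<phi> (x * inverse x) = 0" by (simp only: mult' mult_zero_left)
  moreover have "x * inverse x = 1" using \<open>x \<noteq> 0\<close> by simp
  ultimately show False by simp
qed
lemma eq0_iff [simp]: "\<phi> x = 0 \<longleftrightarrow> x = 0" using nz by force
lemma inj: "inj \<phi>"
proof (rule injI)
  fix x y assume "\<phi> x = \<phi> y" then have "\<phi> (x - y) = 0" by simp
  then show "x = y" using eq0_iff[of "x - y"] by simp
qed

abbreviation P :: "'a poly \<Rightarrow> 'b poly" where "P \<equiv> map_poly \<phi>"

lemma P_coeff [simp]: "coeff (P g) i = \<phi> (coeff g i)"
  by (simp add: coeff_map_poly)
lemma P_degree [simp]: "degree (P g) = degree g"
  by (rule degree_map_poly) simp
lemma P_add [simp]: "P (g + h) = P g + P h"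
  by (rule poly_eqI) simp
lemma P_uminus [simp]: "P (- g) = - P g"
  by (rule poly_eqI) simp
lemma P_diff [simp]: "P (g - h) = P g - P h"
  by (rule poly_eqI) simp
lemma P_smult [simp]: "P (smult c g) = smult (\<phi> c) (P g)"
  by (rule poly_eqI) simp
lemma P_pCons [simp]: "P (pCons c g) = pCons (\<phi> c) (P g)"
  by (rule map_poly_pCons) simp
lemma P_mult [simp]: "P (g * h) = P g * P h"
  by (induction g rule: pCons_induct) (simp_all add: mult_pCons_left)
lemma P_one [simp]: "P 1 = 1" by simp
lemma P_const [simp]: "P [:c:] = [:\<phi> c:]" by simp
lemma P_power [simp]: "P (g ^ k) = P g ^ k"
  by (induction k) simp_all
lemma P_prod [simp]: "P (prod g A) = (\<Prod>i\<in>A. P (g i))"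
  by (induction A rule: infinite_finite_induct) simp_all
lemma P_monom [simp]: "P (monom c k) = monom (\<phi> c) k"
  by (rule map_poly_monom) simp
lemma P_eq0 [simp]: "P g = 0 \<longleftrightarrow> g = 0"
  by (metis P_degree P_coeff eq0_iff leading_coeff_0_iff)
lemma P_reflect: "P (reflect_poly g) = reflect_poly (P g)"
  by (rule poly_eqI) (simp add: coeff_reflect_poly)

end



lemma deg_less_lists:
  assumes "n > 0"
  shows "bij_betw Poly {xs. set xs \<subseteq> (UNIV::'c::zero set) \<and> length xs = n} {g::'c poly. degree g < n}"
proof -
  have inj: "inj_on Poly {xs. set xs \<subseteq> (UNIV::'c set) \<and> length xs = n}"
  proof (rule inj_onI)
    fix xs ys :: "'c list" assume xs: "xs \<in> {xs. set xs \<subseteq> UNIV \<and> length xs = n}"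
      and ys: "ys \<in> {xs. set xs \<subseteq> UNIV \<and> length xs = n}" and eq: "Poly xs = Poly ys"
    show "xs = ys"
    proof (rule nth_equalityI)
      show "length xs = length ys" using xs ys by simp
      fix i assume "i < length xs"
      then have "xs ! i = coeff (Poly xs) i" "ys ! i = coeff (Poly ys) i"
        using xs ys by (simp_all add: nth_default_nth)
      then show "xs ! i = ys ! i" using eq by simp
    qed
  qed
  have img: "Poly ` {xs. set xs \<subseteq> (UNIV::'c set) \<and> length xs = n} = {g::'c poly. degree g < n}"
  proof (intro equalityI subsetI)
    fix g assume "g \<in> Poly ` {xs. set xs \<subseteq> (UNIV::'c set) \<and> length xs = n}"
    then obtain xs where g: "g = Poly xs" and l: "length xs = n" by auto
    have "degree g \<le> n - 1"
      by (rule degree_le) (auto simp: g l nth_default_def)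
    then show "g \<in> {g. degree g < n}" using assms by simp
  next
    fix g :: "'c poly" assume "g \<in> {g. degree g < n}"
    then have d: "degree g < n" by simp
    have "g = Poly (map (coeff g) [0..<n])"
    proof (rule poly_eqI)
      fix i show "coeff g i = coeff (Poly (map (coeff g) [0..<n])) i"
        using d by (auto simp: nth_default_def coeff_eq_0)
    qed
    then show "g \<in> Poly ` {xs. set xs \<subseteq> (UNIV::'c set) \<and> length xs = n}" by force
  qed
  show ?thesis using inj img by (simp add: bij_betw_def)
qed

lemma card_deg_less:
  assumes "n > 0"
  shows "card {g::'c::{zero,finite} poly. degree g < n} = card (UNIV::'c set) ^ n"
    and "finite {g::'c::{zero,finite} poly. degree g < n}"
proof -
  have "card {g::'c poly. degree g < n} = card {xs. set xs \<subseteq> (UNIV::'c set) \<and> length xs = n}"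
    using bij_betw_same_card[OF deg_less_lists[OF assms], symmetric] by simp
  then show "card {g::'c::{zero,finite} poly. degree g < n} = card (UNIV::'c set) ^ n"
    using card_lists_length_eq[of "UNIV::'c set" n] by simp
  show "finite {g::'c::{zero,finite} poly. degree g < n}"
  proof -
    have "finite {xs. set xs \<subseteq> (UNIV::'c set) \<and> length xs = n}" by (rule finite_lists_length_eq) simp
    then show ?thesis using bij_betw_finite[OF deg_less_lists[OF assms]] by blast
  qed
qed


lemma irr_bezout:
  fixes f g :: "'c::field poly"
  assumes irr: "irreducible f" and nd: "\<not> f dvd g"
  shows "\<exists>u v. u * f + v * g = 1"
proof -
  define I where "I = {a. \<exists>u v. a = u * f + v * g}"
  have f0: "f \<noteq> 0" using irr by auto
  have fI: "f \<in> I" unfolding I_def by (rule CollectI, rule exI[of _ 1], rule exI[of _ 0]) simp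
  obtain h where hI: "h \<in> I" and hnz: "h \<noteq> 0" and hmin: "\<And>a. a \<in> I \<Longrightarrow> a \<noteq> 0 \<Longrightarrow> degree h \<le> degree a"
    using ex_has_least_nat[of "\<lambda>a. a \<in> I \<and> a \<noteq> 0" f degree] fI f0 by blast
  have hdvd: "h dvd a" if aI: "a \<in> I" for a
  proof -
    obtain u v where a: "a = u * f + v * g" using aI unfolding I_def by blast
    obtain u' v' where h: "h = u' * f + v' * g" using hI unfolding I_def by blast
    have "a mod h = a - (a div h) * h" by (simp add: minus_div_mult_eq_mod)
    also have "\<dots> = (u - (a div h) * u') * f + (v - (a div h) * v') * g"
      by (simp add: a h algebra_simps)
    finally have "a mod h \<in> I" by (auto simp: I_def)
    show ?thesis
    proof (rule ccontr)
      assume "\<not> h dvd a"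
      then have "a mod h \<noteq> 0" by (simp add: mod_eq_0_iff_dvd)
      then have "degree (a mod h) < degree h" using degree_mod_less'[OF hnz] by blast
      with hmin[OF \<open>a mod h \<in> I\<close> \<open>a mod h \<noteq> 0\<close>] show False by simp
    qed
  qed
  have gI: "g \<in> I" unfolding I_def by (rule CollectI, rule exI[of _ 0], rule exI[of _ 1]) simp
  have "h dvd f" using hdvd[OF fI] .
  then have "f dvd h \<or> is_unit h" using irreducibleD'[OF irr] by blast
  moreover have "\<not> f dvd h" using hdvd[OF gI] nd dvd_trans by blast
  ultimately have "is_unit h" by blast
  then obtain w where w: "1 = h * w" by (auto elim: dvdE)
  obtain u' v' where h: "h = u' * f + v' * g" using hI unfolding I_def by blast
  have "(w * u') * f + (w * v') * g = h * w" using h by (simp add: algebra_simps)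
  then have "(w * u') * f + (w * v') * g = 1" using w by simp
  then show ?thesis by blast
qed

lemma irr_prime_elem:
  fixes f :: "'c::field poly"
  assumes irr: "irreducible f"
  shows "prime_elem f"
proof (rule prime_elemI)
  show "f \<noteq> 0" "\<not> f dvd 1" using irr by (auto simp: irreducible_def)
  fix a b assume ab: "f dvd a * b"
  show "f dvd a \<or> f dvd b"
  proof (cases "f dvd a")
    case True then show ?thesis by simp
  next
    case False
    assume "\<not> f dvd a"
    then obtain u v where uv: "u * f + v * a = 1" using irr_bezout[OF irr] by blast
    have "b = (u * f + v * a) * b" using uv by simp
    also have "\<dots> = (u * b) * f + v * (a * b)" by (simp add: algebra_simps)
    finally have eq: "b = (u * b) * f + v * (a * b)" .
    have "f dvd (u * b) * f + v * (a * b)" using ab by simp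
    then show ?thesis using eq by simp
  qed
qed

lemma prime_elem_not_dvd_prod:
  assumes "prime_elem (f::'c::field poly)" "finite A" "\<forall>h\<in>A. \<not> f dvd h"
  shows "\<not> f dvd \<Prod>A"
  using assms(2,3)
proof (induction A rule: finite_induct)
  case empty
  then show ?case using assms(1) by (simp add: prime_elem_not_unit)
next
  case (insert x F)
  then show ?case using assms(1) by (simp add: prime_elem_dvd_mult_iff)
qed

lemma poly_fermat:
  fixes f g :: "'c::{field,finite} poly"
  assumes irr: "irreducible f" and dg: "degree g < degree f"
  shows "f dvd g ^ (card (UNIV::'c set) ^ degree f) - g"
proof (cases "g = 0")
  case True
  then show ?thesis by (simp add: power_0_left)
next
  case gnz: False
  define n where "n = degree f"
  have n0: "n > 0" using dg n_def by simp
  have f0: "f \<noteq> 0" using n0 n_def by auto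
  have pe: "prime_elem f" using irr by (rule irr_prime_elem)
  define R where "R = {h::'c poly. degree h < n}"
  define S where "S = R - {0}"
  have finR: "finite R" and cardR: "card R = card (UNIV::'c set) ^ n"
    using card_deg_less[OF n0] by (simp_all add: R_def)
  have finS: "finite S" using finR by (simp add: S_def)
  have ndvd: "\<not> f dvd h" if "h \<in> S" for h
  proof
    assume "f dvd h"
    moreover have "h \<noteq> 0" "degree h < n" using that by (auto simp: S_def R_def)
    ultimately show False using dvd_imp_degree_le[of f h] n_def by simp
  qed
  have gS: "g \<in> S" using gnz dg by (simp add: S_def R_def n_def)
  have ngf: "\<not> f dvd g" using ndvd[OF gS] .
  define m where "m h = (g * h) mod f" for h
  have mS: "m h \<in> S" if "h \<in> S" for h
  proof -
    have "\<not> f dvd g * h" using ndvd[OF that] ngf pe by (simp add: prime_elem_dvd_mult_iff)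
    then have "m h \<noteq> 0" by (simp add: m_def mod_eq_0_iff_dvd)
    moreover have "degree (m h) < n" using degree_mod_less'[OF f0 \<open>m h \<noteq> 0\<close>[unfolded m_def]]
      by (simp add: m_def n_def)
    ultimately show ?thesis by (simp add: S_def R_def)
  qed
  have inj: "inj_on m S"
  proof (rule inj_onI)
    fix h1 h2 assume h1: "h1 \<in> S" and h2: "h2 \<in> S" and eq: "m h1 = m h2"
    then have "f dvd g * h1 - g * h2" by (simp add: m_def mod_eq_dvd_iff)
    then have "f dvd g * (h1 - h2)" by (simp add: right_diff_distrib)
    then have d: "f dvd h1 - h2" using ngf pe by (simp add: prime_elem_dvd_mult_iff)
    have "degree (h1 - h2) < n" using h1 h2 by (intro degree_diff_less) (auto simp: S_def R_def)
    then have "h1 - h2 = 0" using d dvd_imp_degree_le[of f "h1 - h2"] n_def by fastforce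
    then show "h1 = h2" by simp
  qed
  have img: "m ` S = S" by (rule endo_inj_surj[OF finS _ inj]) (use mS in auto)
  have "\<Prod>S = prod (\<lambda>h. h) (m ` S)" using img by simp
  also have "\<dots> = (\<Prod>h\<in>S. m h)" using prod.reindex[OF inj, of "\<lambda>h. h"] by simp
  finally have e1: "\<Prod>S mod f = (\<Prod>h\<in>S. m h) mod f" by simp
  also have "\<dots> = (\<Prod>h\<in>S. g * h) mod f" unfolding m_def by (rule mod_prod_eq)
  also have "(\<Prod>h\<in>S. g * h) = g ^ card S * \<Prod>S" by (simp add: prod.distrib)
  finally have "f dvd \<Prod>S - g ^ card S * \<Prod>S" by (simp only: mod_eq_dvd_iff)
  moreover have "(g ^ card S - 1) * \<Prod>S = - (\<Prod>S - g ^ card S * \<Prod>S)" by (simp add: algebra_simps)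
  ultimately have "f dvd (g ^ card S - 1) * \<Prod>S" by (simp only: dvd_minus_iff)
  moreover have "\<not> f dvd \<Prod>S" using prime_elem_not_dvd_prod[OF pe finS] ndvd by blast
  ultimately have "f dvd g ^ card S - 1" using pe by (simp add: prime_elem_dvd_mult_iff)
  then have "f dvd g * (g ^ card S - 1)" by simp
  moreover have "card S + 1 = card (UNIV::'c set) ^ n"
  proof -
    have "0 \<in> R" using n0 by (simp add: R_def)
    then have "card S = card R - 1" using finR by (simp add: S_def)
    moreover have "card R > 0" using finR \<open>0 \<in> R\<close> card_gt_0_iff by blast
    ultimately show ?thesis using cardR by simp
  qed
  moreover have "g ^ (card S + 1) - g = g * (g ^ card S - 1)" by (simp add: algebra_simps)
  ultimately show ?thesis by (simp add: n_def)
qed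



lemma xpow_deg:
  assumes "M \<ge> 2"
  shows "degree ([:0,1:] ^ M - [:0,1:] :: 'c::field poly) = M"
proof -
  have "degree ([:0,1:] ^ M + - [:0,1:] :: 'c poly) = degree ([:0,1:] ^ M :: 'c poly)"
    by (rule degree_add_eq_left) (use assms degree_linear_power[of "0::'c" M] in simp)
  then show ?thesis using degree_linear_power[of "0::'c" M] by (simp only: diff_conv_add_uminus)
qed

lemma xpow_nz:
  assumes "M \<ge> 2"
  shows "([:0,1:] ^ M - [:0,1:] :: 'c::field poly) \<noteq> 0"
  using xpow_deg[OF assms, where 'c='c] assms by fastforce

lemma prod_lin_dvd:
  fixes p :: "'c::field poly"
  assumes "finite A" "\<forall>a\<in>A. poly p a = 0"
  shows "(\<Prod>a\<in>A. [:-a,1:]) dvd p"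
  using assms
proof (induction A arbitrary: p rule: finite_induct)
  case empty then show ?case by simp
next
  case (insert x F)
  from insert have "(\<Prod>a\<in>F. [:-a,1:]) dvd p" by simp
  then obtain k where k: "p = (\<Prod>a\<in>F. [:-a,1:]) * k" by (auto elim: dvdE)
  have "poly (\<Prod>a\<in>F. [:-a,1:]) x \<noteq> 0"
    using insert(1,2) by (simp add: poly_prod)
  moreover have "poly p x = 0" using insert by simp
  ultimately have "poly k x = 0" using k by simp
  then have "[:-x,1:] dvd k" by (simp add: poly_eq_0_iff_dvd)
  then obtain k' where "k = [:-x,1:] * k'" by (auto elim: dvdE)
  then have "p = ([:-x,1:] * (\<Prod>a\<in>F. [:-a,1:])) * k'" using k by (metis mult.assoc mult.commute)
  moreover have "(\<Prod>a\<in>insert x F. [:-a,1:]) = [:-x,1:] * (\<Prod>a\<in>F. [:-a,1:])"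
    using insert(1,2) by simp
  ultimately show ?case by (metis dvd_triv_left)
qed

lemma monic_dvd_eq:
  fixes D p :: "'c::field poly"
  assumes "D dvd p" "degree D = degree p" "lead_coeff D = 1" "lead_coeff p = 1"
  shows "D = p"
proof -
  obtain k where k: "p = D * k" using assms(1) by (auto elim: dvdE)
  have p0: "p \<noteq> 0" using assms(4) by auto
  then have "k \<noteq> 0" "D \<noteq> 0" using k by auto
  then have "degree p = degree D + degree k" using k by (simp add: degree_mult_eq)
  then have "degree k = 0" using assms(2) by simp
  then obtain c where c: "k = [:c:]" by (metis degree_eq_zeroE)
  have "lead_coeff p = lead_coeff D * c" using k c by (simp add: lead_coeff_mult)
  then have "c = 1" using assms(3,4) by simp
  then show ?thesis using k c by simp
qed

definition ordb :: "'c::field \<Rightarrow> nat" where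
  "ordb y = (LEAST s. s > 0 \<and> y ^ s = 1)"

lemma ordb_exists:
  fixes y :: "'c::{field,finite}"
  assumes "y \<noteq> 0"
  shows "\<exists>s. s > 0 \<and> y ^ s = 1"
proof -
  have c2: "card (UNIV::'c set) \<ge> 2"
  proof -
    have "{0::'c, 1} \<subseteq> UNIV" by simp
    then have "card {0::'c, 1} \<le> card (UNIV::'c set)" by (rule card_mono[OF finite_UNIV])
    then show ?thesis by simp
  qed
  have cs: "card (UNIV::'c set) = Suc (card (UNIV::'c set) - 1)" using c2 by simp
  have "y * y ^ (card (UNIV::'c set) - 1) = y ^ card (UNIV::'c set)"
    by (subst (2) cs) (simp only: power_Suc)
  also have "\<dots> = y" by (rule fermat_card)
  finally have "y ^ (card (UNIV::'c set) - 1) = 1" using assms by simp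
  then show ?thesis using c2 by (intro exI[of _ "card (UNIV::'c set) - 1"]) simp
qed

lemma ordb_props:
  fixes y :: "'c::{field,finite}"
  assumes "y \<noteq> 0"
  shows "ordb y > 0" "y ^ ordb y = 1" "\<And>k. 0 < k \<Longrightarrow> k < ordb y \<Longrightarrow> y ^ k \<noteq> 1"
proof -
  have ex: "\<exists>s. s > 0 \<and> y ^ s = 1" using ordb_exists[OF assms] .
  show "ordb y > 0" "y ^ ordb y = 1" using LeastI_ex[OF ex] by (simp_all add: ordb_def)
  fix k assume "0 < k" "k < ordb y"
  then show "y ^ k \<noteq> 1" using not_less_Least[of k "\<lambda>s. s > 0 \<and> y ^ s = 1"] by (auto simp: ordb_def)
qed

lemma ordb_dvd_iff:
  fixes y :: "'c::{field,finite}"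
  assumes "y \<noteq> 0"
  shows "y ^ s = 1 \<longleftrightarrow> ordb y dvd s"
proof -
  define d where "d = ordb y"
  have d0: "d > 0" and yd: "y ^ d = 1" and mn: "\<And>k. 0 < k \<Longrightarrow> k < d \<Longrightarrow> y ^ k \<noteq> 1"
    using ordb_props[OF assms] by (simp_all add: d_def)
  have "y ^ s = y ^ (s mod d)"
  proof -
    have "s = d * (s div d) + s mod d" by simp
    then have "y ^ s = y ^ (d * (s div d) + s mod d)" by (rule arg_cong)
    also have "\<dots> = (y ^ d) ^ (s div d) * y ^ (s mod d)" by (simp only: power_add power_mult)
    finally show ?thesis using yd by simp
  qed
  moreover have "s mod d < d" using d0 by simp
  ultimately have "y ^ s = 1 \<longleftrightarrow> s mod d = 0" using mn by (cases "s mod d = 0") auto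
  then show ?thesis by (simp add: d_def dvd_eq_mod_eq_0)
qed

lemma primitive_iff_ordb:
  fixes y :: "'c::{field,finite}"
  shows "primitive_root_of_unity d y \<longleftrightarrow> y \<noteq> 0 \<and> d = ordb y"
proof
  assume pr: "primitive_root_of_unity d y"
  then have d: "d > 0" "y ^ d = 1" "\<And>k. 0 < k \<Longrightarrow> k < d \<Longrightarrow> y ^ k \<noteq> 1"
    by (auto simp: primitive_root_of_unity_def)
  then have y0: "y \<noteq> 0" by (metis power_0_left less_not_refl zero_neq_one)
  have "ordb y = d" unfolding ordb_def
  proof (rule Least_equality)
    show "d > 0 \<and> y ^ d = 1" using d by simp
    fix m assume "m > 0 \<and> y ^ m = 1"
    then show "d \<le> m" using d(3) not_less by blast
  qed
  then show "y \<noteq> 0 \<and> d = ordb y" using y0 by simp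
next
  assume "y \<noteq> 0 \<and> d = ordb y"
  then show "primitive_root_of_unity d y" using ordb_props[of y]
    by (auto simp: primitive_root_of_unity_def)
qed



locale ctx = fhom \<phi> for \<phi> :: "'a::{field,finite} \<Rightarrow> 'b::{field,finite}" +
  fixes q n p e :: nat and f :: "'a poly"
  assumes p: "prime p" and e: "e > 0" and qpe: "q = p ^ e"
    and cardA: "card (UNIV::'a set) = q ^ 2"
    and cardB: "card (UNIV::'b set) = q ^ (2 * n)"
    and oddn: "odd n" and n3: "n \<ge> 3"
    and irr: "irreducible f" and monic: "lead_coeff f = 1" and deg: "degree f = n"
begin

abbreviation Q where "Q \<equiv> q ^ 2"

lemma cardA': "card (UNIV::'a set) = p ^ (2 * e)"
  using cardA qpe by (simp add: power_mult[symmetric] mult.commute)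
lemma cardB': "card (UNIV::'b set) = p ^ (2 * e * n)"
  using cardB qpe by (simp add: power_mult[symmetric] mult.commute mult.left_commute)
lemma e2: "2 * e > 0" "2 * e * n > 0" using e n3 by simp_all

lemma q2: "q \<ge> 2"
proof -
  have "p \<ge> 2" using p by (simp add: prime_ge_2_nat)
  moreover have "p ^ 1 \<le> p ^ e" using e p prime_gt_0_nat[OF p] by (intro power_increasing) auto
  ultimately show ?thesis using qpe by simp
qed
lemma Q4: "Q \<ge> 4"
proof -
  have "2 ^ 2 \<le> q ^ 2" using q2 by (intro power_mono) simp_all
  then show ?thesis by simp
qed
lemma qpow: "q ^ j = p ^ (e * j)" using qpe by (simp add: power_mult)

lemma frobB: "((x::'b) + y) ^ (q ^ j) = x ^ (q ^ j) + y ^ (q ^ j)"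
  unfolding qpow by (rule frob_add[OF p cardB' e2(2)])
lemma qinjB: "(x::'b) ^ (q ^ j) = y ^ (q ^ j) \<Longrightarrow> x = y"
  unfolding qpow by (rule pow_inj_frob[OF p cardB' e2(2)])
lemma qinjB1: "(x::'b) ^ q = y ^ q \<Longrightarrow> x = y"
  using qinjB[of x 1 y] by simp
lemma fermA: "(c::'a) ^ (Q ^ k) = c"
  using fermat_card_pow[of c k] cardA by simp
lemma fermB: "(y::'b) ^ (Q ^ n) = y"
  using fermat_card[of y] cardB by (simp add: power_mult)

lemma n0: "n > 0" using n3 by simp
lemma f0: "f \<noteq> 0" using monic by auto

lemma ev_frob_gen:
  assumes h0: "h 0 = 0" and hphi: "\<And>c. \<phi> (h c) = \<phi> c ^ (q ^ j)"
  shows "poly (P (map_poly h g)) (y ^ (q ^ j)) = (poly (P g) y) ^ (q ^ j)"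
proof (induction g rule: pCons_induct)
  case 0
  have "q ^ j > 0" using q2 by simp
  then show ?case by simp
next
  case (pCons a g)
  have "map_poly h (pCons a g) = pCons (h a) (map_poly h g)" using map_poly_pCons[of h a g] h0 by simp
  then have "poly (P (map_poly h (pCons a g))) (y ^ (q ^ j))
      = \<phi> a ^ (q ^ j) + y ^ (q ^ j) * (poly (P g) y) ^ (q ^ j)"
    using pCons.IH by (simp add: hphi)
  also have "\<dots> = (\<phi> a + y * poly (P g) y) ^ (q ^ j)" by (simp add: frobB power_mult_distrib)
  finally show ?case by simp
qed

lemma ev_frobQ: "poly (P g) (y ^ (Q ^ k)) = (poly (P g) y) ^ (Q ^ k)"
proof -
  have "poly (P (map_poly (\<lambda>x. x) g)) (y ^ (q ^ (2 * k))) = (poly (P g) y) ^ (q ^ (2 * k))"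
    by (rule ev_frob_gen) (simp_all add: fermA[unfolded power_mult[symmetric]] flip: power)
  then show ?thesis by (simp add: power_mult)
qed

lemma ev_conj: "poly (P (conj_poly q g)) (y ^ q) = (poly (P g) y) ^ q"
proof -
  have "poly (P (map_poly (\<lambda>x. x ^ q) g)) (y ^ (q ^ 1)) = (poly (P g) y) ^ (q ^ 1)"
    by (rule ev_frob_gen) (use q2 in simp_all)
  then show ?thesis by (simp add: conj_poly_def)
qed

lemma ev_dvd:
  assumes "poly (P f) \<gamma> = 0" "poly (P g) \<gamma> = 0"
  shows "f dvd g"
proof (rule ccontr)
  assume "\<not> f dvd g"
  then obtain u v where "u * f + v * g = 1" using irr_bezout[OF irr] by blast
  then have "poly (P (u * f + v * g)) \<gamma> = 1" by simp
  then show False using assms by simp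
qed

lemma dvd_ev:
  assumes "f dvd g" "poly (P f) \<gamma> = 0"
  shows "poly (P g) \<gamma> = 0"
proof -
  obtain k where "g = f * k" using assms(1) by (auto elim: dvdE)
  then show ?thesis using assms(2) by simp
qed

lemma coeff0: "coeff f 0 \<noteq> 0"
proof
  assume "coeff f 0 = 0"
  then have "poly f 0 = 0" by (simp add: poly_0_coeff_0)
  then have "[:0,1:] dvd f" by (simp add: poly_eq_0_iff_dvd)
  then have "f dvd [:0,1:] \<or> is_unit ([:0,1::'a:])" using irreducibleD'[OF irr] by blast
  moreover have "\<not> is_unit ([:0,1::'a:])" by (simp add: is_unit_iff_degree)
  ultimately have "f dvd [:0,1:]" by blast
  then have "degree f \<le> 1" using dvd_imp_degree_le[of f "[:0,1::'a:]"] by simp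
  then show False using deg n3 by simp
qed

lemma root_nz: "poly (P f) \<gamma> = 0 \<Longrightarrow> \<gamma> \<noteq> 0"
  using coeff0 by (auto simp: poly_0_coeff_0)

lemma root_exists: "\<exists>\<beta>. poly (P f) \<beta> = 0"
proof (rule ccontr)
  assume nr: "\<not> (\<exists>\<beta>. poly (P f) \<beta> = 0)"
  define N where "N = card (UNIV::'b set)"
  have NA: "N = card (UNIV::'a set) ^ degree f" using cardA cardB deg by (simp add: N_def power_mult)
  have N2: "N \<ge> 2"
  proof -
    have "Q ^ 1 \<le> Q ^ n" using Q4 n0 by (intro power_increasing) simp_all
    then show ?thesis using Q4 NA cardA deg by simp
  qed
  have "f dvd [:0,1:] ^ N - [:0,1:]"
    unfolding NA by (rule poly_fermat[OF irr]) (use deg n3 in simp)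
  then obtain k where k: "[:0,1:] ^ N - [:0,1:] = f * k" by (auto elim: dvdE)
  have knz: "k \<noteq> 0" using xpow_nz[OF N2, where 'c='a] k by auto
  have "degree ([:0,1::'a:] ^ N - [:0,1:]) = N" by (rule xpow_deg[OF N2])
  then have dk: "degree k = N - n" using k knz f0 deg by (simp add: degree_mult_eq)
  have allr: "poly (P k) b = 0" for b
  proof -
    have "poly (P ([:0,1:] ^ N - [:0,1:])) b = b ^ N - b" by simp
    also have "\<dots> = 0" using fermat_card[of b] by (simp add: N_def)
    finally have "poly (P f) b * poly (P k) b = 0" using k by simp
    then show ?thesis using nr by auto
  qed
  have "card {b. poly (P k) b = 0} \<le> degree (P k)"
    by (rule card_poly_roots_bound) (use knz in simp)
  then have "N \<le> N - n" using allr dk by (simp add: N_def)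
  then show False using N2 n0 by simp
qed

end



context ctx begin

lemma R_card: "card {g::'a poly. degree g < n} = Q ^ n" "finite {g::'a poly. degree g < n}"
  using card_deg_less[OF n0, where 'c='a] cardA by simp_all

lemma dist:
  assumes r: "poly (P f) \<beta> = 0" and k: "0 < k" "k < n"
  shows "\<beta> ^ (Q ^ k) \<noteq> \<beta>"
proof
  assume fx: "\<beta> ^ (Q ^ k) = \<beta>"
  define M where "M = Q ^ k"
  have M2: "M \<ge> 2"
  proof -
    have "Q ^ 1 \<le> Q ^ k" using Q4 k by (intro power_increasing) simp_all
    then show ?thesis using Q4 by (simp add: M_def)
  qed
  define L where "L = {y::'b. poly ([:0,1:] ^ M - [:0,1:]) y = 0}"
  have cardL: "card L \<le> M"
    using card_poly_roots_bound[OF xpow_nz[OF M2, where 'c='b]] xpow_deg[OF M2, where 'c='b]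
    by (simp add: L_def)
  define R where "R = {g::'a poly. degree g < n}"
  define ev where "ev g = poly (P g) \<beta>" for g
  have inj: "inj_on ev R"
  proof (rule inj_onI)
    fix g1 g2 assume g1: "g1 \<in> R" and g2: "g2 \<in> R" and eq: "ev g1 = ev g2"
    then have "poly (P (g1 - g2)) \<beta> = 0" by (simp add: ev_def)
    then have d: "f dvd g1 - g2" by (rule ev_dvd[OF r])
    have "degree (g1 - g2) < n" using g1 g2 by (intro degree_diff_less) (auto simp: R_def)
    then have "g1 - g2 = 0" using d dvd_imp_degree_le[of f "g1 - g2"] deg by fastforce
    then show "g1 = g2" by simp
  qed
  have sub: "ev ` R \<subseteq> L"
  proof
    fix y assume "y \<in> ev ` R"
    then obtain g where y: "y = ev g" by auto
    have "y ^ M = y" using ev_frobQ[of g \<beta> k] fx by (simp add: y ev_def M_def)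
    then show "y \<in> L" by (simp add: L_def)
  qed
  have "card R \<le> card L" by (rule card_inj_on_le[OF inj sub]) simp
  then have "Q ^ n \<le> Q ^ k" using R_card cardL by (simp add: R_def M_def)
  moreover have "Q ^ k < Q ^ n" using Q4 k by (intro power_strict_increasing) simp_all
  ultimately show False by simp
qed

lemma orbit_period:
  assumes r: "poly (P f) \<beta> = 0"
  shows "\<beta> ^ (Q ^ (n * t)) = \<beta>"
proof (induction t)
  case 0 then show ?case by simp
next
  case (Suc t)
  have "\<beta> ^ (Q ^ (n * Suc t)) = (\<beta> ^ (Q ^ (n * t))) ^ (Q ^ n)"
    by (simp add: power_add power_mult[symmetric] mult.commute)
  then show ?case using Suc fermB by simp
qed

lemma orbit_dvd:
  assumes r: "poly (P f) \<beta> = 0" and fx: "\<beta> ^ (Q ^ m) = \<beta>"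
  shows "n dvd m"
proof (rule ccontr)
  assume nd: "\<not> n dvd m"
  define t where "t = m div n"
  define s where "s = m mod n"
  have s: "0 < s" "s < n" using nd n0 by (auto simp: s_def dvd_eq_mod_eq_0)
  have "m = n * t + s" by (simp add: t_def s_def)
  then have "\<beta> ^ (Q ^ m) = (\<beta> ^ (Q ^ (n * t))) ^ (Q ^ s)"
    by (simp add: power_add power_mult[symmetric] mult.commute)
  then have "\<beta> ^ (Q ^ s) = \<beta>" using fx orbit_period[OF r] by simp
  then show False using dist[OF r s] by simp
qed

lemma conj_root: "poly (P f) \<beta> = 0 \<Longrightarrow> poly (P f) (\<beta> ^ (Q ^ i)) = 0"
  using ev_frobQ[of f \<beta> i] q2 by simp

lemma conj_distinct:
  assumes r: "poly (P f) \<beta> = 0" and ij: "i < j" "j < n"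
  shows "\<beta> ^ (Q ^ i) \<noteq> \<beta> ^ (Q ^ j)"
proof
  assume eq: "\<beta> ^ (Q ^ i) = \<beta> ^ (Q ^ j)"
  have "Q ^ j = Q ^ (j - i) * q ^ (2 * i)" using ij by (simp add: power_add[symmetric] power_mult)
  then have "\<beta> ^ (Q ^ j) = (\<beta> ^ (Q ^ (j - i))) ^ (q ^ (2 * i))" by (simp add: power_mult)
  moreover have "\<beta> ^ (Q ^ i) = \<beta> ^ (q ^ (2 * i))" by (simp add: power_mult)
  ultimately have "(\<beta> ^ (Q ^ (j - i))) ^ (q ^ (2 * i)) = \<beta> ^ (q ^ (2 * i))" using eq by simp
  then have "\<beta> ^ (Q ^ (j - i)) = \<beta>" by (rule qinjB)
  then show False using dist[OF r, of "j - i"] ij by simp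
qed

lemma Pf_eq:
  assumes r: "poly (P f) \<beta> = 0"
  shows "P f = (\<Prod>i<n. [:- (\<beta> ^ (Q ^ i)), 1:])"
proof -
  define A where "A = (\<lambda>i. \<beta> ^ (Q ^ i)) ` {..<n}"
  have inj: "inj_on (\<lambda>i. \<beta> ^ (Q ^ i)) {..<n}"
  proof (rule inj_onI)
    fix i j assume "i \<in> {..<n}" "j \<in> {..<n}" "\<beta> ^ (Q ^ i) = \<beta> ^ (Q ^ j)"
    then show "i = j" using conj_distinct[OF r, of i j] conj_distinct[OF r, of j i]
      by (metis lessThan_iff linorder_neqE_nat)
  qed
  have prodA: "(\<Prod>a\<in>A. [:-a,1:]) = (\<Prod>i<n. [:- (\<beta> ^ (Q ^ i)), 1:])"
    unfolding A_def using prod.reindex[OF inj, of "\<lambda>a. [:-a,1:]"] by simp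
  have "(\<Prod>a\<in>A. [:-a,1:]) dvd P f"
    by (rule prod_lin_dvd) (use conj_root[OF r] in \<open>auto simp: A_def\<close>)
  then have dv: "(\<Prod>i<n. [:- (\<beta> ^ (Q ^ i)), 1:]) dvd P f" using prodA by simp
  have dg: "degree (\<Prod>i<n. [:- (\<beta> ^ (Q ^ i)), 1:]) = n"
    by (subst degree_prod_sum_eq) auto
  have lc: "lead_coeff (\<Prod>i<n. [:- (\<beta> ^ (Q ^ i)), 1:]) = 1"
    by (simp add: lead_coeff_prod)
  have lcf: "lead_coeff (P f) = 1" using monic by (simp add: deg)
  show ?thesis by (rule monic_dvd_eq[OF dv _ lc lcf, symmetric]) (simp add: dg deg)
qed

lemma root_is_conj:
  assumes r: "poly (P f) \<beta> = 0" and r2: "poly (P f) \<gamma> = 0"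
  shows "\<exists>i<n. \<gamma> = \<beta> ^ (Q ^ i)"
proof -
  have "poly (\<Prod>i<n. [:- (\<beta> ^ (Q ^ i)), 1:]) \<gamma> = 0" using r2 Pf_eq[OF r] by simp
  then show ?thesis by (auto simp: poly_prod)
qed

lemma poly_ord_eq:
  assumes r: "poly (P f) \<gamma> = 0"
  shows "poly_ord f = ordb \<gamma>"
proof -
  have "f dvd (monom 1 s - 1) \<longleftrightarrow> \<gamma> ^ s = 1" for s
  proof
    assume "f dvd monom 1 s - 1"
    then have "poly (P (monom 1 s - 1)) \<gamma> = 0" by (rule dvd_ev[OF _ r])
    then show "\<gamma> ^ s = 1" by (simp add: poly_monom)
  next
    assume "\<gamma> ^ s = 1"
    then have "poly (P (monom 1 s - 1)) \<gamma> = 0" by (simp add: poly_monom)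
    then show "f dvd monom 1 s - 1" by (rule ev_dvd[OF r])
  qed
  then show ?thesis unfolding poly_ord_def ordb_def by simp
qed

end



context ctx begin

abbreviation F where "F \<equiv> conj_recip q f"

lemma L1:
  assumes r: "poly (P f) y = 0"
  shows "poly (P F) ((inverse y) ^ q) = 0"
proof -
  have y0: "y \<noteq> 0" by (rule root_nz[OF r])
  have "poly (P (recip_poly f)) (inverse y)
      = \<phi> (inverse (coeff f 0)) * poly (reflect_poly (P f)) (inverse y)"
    by (simp add: recip_poly_def P_reflect)
  also have "poly (reflect_poly (P f)) (inverse y) = (inverse y) ^ degree (P f) * poly (P f) y"
    using y0 by (simp add: poly_reflect_poly_nz)
  finally have "poly (P (recip_poly f)) (inverse y) = 0" using r by simp
  then show ?thesis unfolding conj_recip_def using ev_conj[of "recip_poly f" "inverse y"] q2 by simp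
qed

lemma coeff_F: "coeff F i = (inverse (coeff f 0) * coeff (reflect_poly f) i) ^ q"
  using q2 by (simp add: conj_recip_def conj_poly_def recip_poly_def coeff_map_poly)

lemma fdag_eq:
  assumes "f dvd F"
  shows "F = f"
proof -
  have c: "coeff F i = 0" if "i > n" for i
    using that q2 by (simp add: coeff_F coeff_reflect_poly deg)
  have cn: "coeff F n = 1"
    using coeff0 q2 by (simp add: coeff_F coeff_reflect_poly deg)
  have "degree F \<le> n" by (rule degree_le) (use c in auto)
  moreover have "n \<le> degree F" using cn by (intro le_degree) simp
  ultimately have dF: "degree F = n" by simp
  have lF: "lead_coeff F = 1" using dF cn by simp
  show ?thesis by (rule monic_dvd_eq[OF assms _ monic lF, symmetric]) (simp add: dF deg)
qed

lemma K:
  assumes r: "poly (P f) \<beta> = 0" and h: "\<beta> ^ (q ^ k) * \<beta> = 1"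
  shows "n dvd k"
proof -
  define z where "z = \<beta> ^ (q ^ k)"
  have "(z * \<beta>) ^ (q ^ k) = 1" using h by (simp add: z_def)
  then have "z ^ (q ^ k) * \<beta> ^ (q ^ k) = 1" by (simp add: power_mult_distrib)
  moreover have "z ^ (q ^ k) = \<beta> ^ (Q ^ k)"
    by (simp add: z_def power_mult[symmetric] power_add[symmetric] mult_2)
  ultimately have "\<beta> ^ (Q ^ k) * z = \<beta> * z" using h by (simp add: z_def mult.commute)
  moreover have "z \<noteq> 0" using h by (auto simp: z_def)
  ultimately have "\<beta> ^ (Q ^ k) = \<beta>" by simp
  then show ?thesis by (rule orbit_dvd[OF r])
qed

lemma K0:
  assumes r: "poly (P f) \<beta> = 0"
  shows "\<beta> ^ 2 \<noteq> 1"
proof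
  assume b2: "\<beta> ^ 2 = 1"
  have "(\<beta> - 1) * (\<beta> + 1) = \<beta> ^ 2 - 1" by (simp add: algebra_simps power2_eq_square)
  then have "(\<beta> - 1) * (\<beta> + 1) = 0" using b2 by simp
  then have "\<beta> = 1 \<or> \<beta> = - 1" by (auto simp: eq_neg_iff_add_eq_0)
  then obtain c where c: "\<beta> = \<phi> c" by (metis one' uminus)
  have "\<beta> ^ (Q ^ 1) = \<phi> (c ^ (Q ^ 1))" by (simp add: c)
  also have "\<dots> = \<beta>" using fermA[of c 1] c by simp
  finally have "n dvd 1" by (rule orbit_dvd[OF r])
  then show False using n3 by simp
qed

lemma scr_imp_D:
  assumes r: "poly (P f) \<beta> = 0" and s: "f = F"
  shows "ordb \<beta> \<in> Dset q n"
proof -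
  have b0: "\<beta> \<noteq> 0" by (rule root_nz[OF r])
  have "poly (P f) ((inverse \<beta>) ^ q) = 0" using L1[OF r] s by simp
  then obtain i where i: "i < n" "(inverse \<beta>) ^ q = \<beta> ^ (Q ^ i)" using root_is_conj[OF r] by blast
  have main: "\<beta> ^ (q ^ n) * \<beta> = 1"
  proof (cases "i = 0")
    case True
    then have "(inverse \<beta>) ^ q = \<beta>" using i by simp
    then have "\<beta> ^ q * \<beta> = \<beta> ^ q * (inverse \<beta>) ^ q" by simp
    also have "\<dots> = 1" using b0 by (simp add: power_mult_distrib[symmetric])
    finally have "n dvd 1" using K[OF r, of 1] by simp
    then show ?thesis using n3 by simp
  next
    case False
    define e' where "e' = 2 * i - 1"
    have "Q ^ i = q ^ e' * q" using False by (simp add: e'_def power_mult[symmetric] power_Suc2[symmetric])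
    then have "\<beta> ^ (Q ^ i) = (\<beta> ^ (q ^ e')) ^ q" by (simp add: power_mult)
    then have "(\<beta> ^ (q ^ e')) ^ q = (inverse \<beta>) ^ q" using i by simp
    then have "\<beta> ^ (q ^ e') = inverse \<beta>" by (rule qinjB1)
    then have h: "\<beta> ^ (q ^ e') * \<beta> = 1" using b0 by simp
    then have "n dvd e'" by (rule K[OF r])
    then obtain t where t: "e' = n * t" by (auto elim: dvdE)
    have "odd e'" using False by (simp add: e'_def)
    then have "odd t" using t by simp
    have nt: "n * t < n * 2" using t i unfolding e'_def by linarith
    then have "t < 2" using n0 by simp
    with \<open>odd t\<close> have "t = 1" by presburger
    then show ?thesis using h t by simp
  qed
  have dpos: "ordb \<beta> > 0" using ordb_props[OF b0] by simp
  have "ordb \<beta> dvd q ^ n + 1"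
    using main ordb_dvd_iff[OF b0, of "q ^ n + 1"] by (simp add: power_add mult.commute)
  moreover have "\<not> ordb \<beta> dvd q ^ k + 1" if "k < n" for k
  proof
    assume "ordb \<beta> dvd q ^ k + 1"
    then have h: "\<beta> ^ (q ^ k) * \<beta> = 1" using ordb_dvd_iff[OF b0, of "q ^ k + 1"] by (simp add: power_add mult.commute)
    then have "n dvd k" by (rule K[OF r])
    then have "k = 0" using that by (auto elim: dvdE)
    then have "\<beta> ^ 2 = 1" using h by (simp add: power2_eq_square)
    then show False using K0[OF r] by simp
  qed
  ultimately show ?thesis using dpos by (simp add: Dset_def)
qed

lemma D_imp_scr:
  assumes r: "poly (P f) \<beta> = 0" and d: "ordb \<beta> dvd q ^ n + 1"
  shows "f = F"
proof -
  have b0: "\<beta> \<noteq> 0" by (rule root_nz[OF r])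
  have "\<beta> ^ (q ^ n + 1) = 1" using d ordb_dvd_iff[OF b0] by blast
  then have "\<beta> * \<beta> ^ (q ^ n) = 1" by (simp add: power_add mult.commute)
  then have bi: "\<beta> ^ (q ^ n) = inverse \<beta>" by (metis inverse_unique)
  define j where "j = (n + 1) div 2"
  have j2: "2 * j = n + 1" using oddn by (simp add: j_def)
  have "Q ^ j = q ^ n * q" using j2 by (simp add: power_mult[symmetric])
  then have y1: "\<beta> ^ (Q ^ j) = (inverse \<beta>) ^ q" using bi by (simp add: power_mult)
  have r1: "poly (P f) ((inverse \<beta>) ^ q) = 0" using conj_root[OF r, of j] y1 by simp
  have "poly (P F) ((inverse ((inverse \<beta>) ^ q)) ^ q) = 0" by (rule L1[OF r1])
  moreover have "(inverse ((inverse \<beta>) ^ q)) ^ q = \<beta> ^ (Q ^ 1)"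
    by (simp add: power_inverse power_mult[symmetric] power2_eq_square)
  ultimately have "poly (P F) (\<beta> ^ (Q ^ 1)) = 0" by simp
  then have "f dvd F" by (rule ev_dvd[OF conj_root[OF r]])
  then show ?thesis using fdag_eq by simp
qed

lemma main_ctx:
  "(self_conj_recip q f \<longleftrightarrow> poly_ord f \<in> Dset q n) \<and>
   (poly_ord f \<in> Dset q n \<longleftrightarrow>
      (\<exists>d \<in> Dset q n. \<exists>\<beta>::'b. primitive_root_of_unity d \<beta> \<and> P f = f_beta q n \<beta>))"
proof -
  obtain \<beta> where r: "poly (P f) \<beta> = 0" using root_exists by blast
  have b0: "\<beta> \<noteq> 0" by (rule root_nz[OF r])
  have po: "poly_ord f = ordb \<beta>" by (rule poly_ord_eq[OF r])
  have fb: "P f = f_beta q n \<beta>"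
    unfolding f_beta_def Pf_eq[OF r] by (simp add: power_mult)
  have p1: "self_conj_recip q f \<longleftrightarrow> poly_ord f \<in> Dset q n"
  proof
    assume "self_conj_recip q f"
    then show "poly_ord f \<in> Dset q n" using scr_imp_D[OF r] po by (simp add: self_conj_recip_def)
  next
    assume "poly_ord f \<in> Dset q n"
    then have "ordb \<beta> dvd q ^ n + 1" using po by (simp add: Dset_def)
    then show "self_conj_recip q f" using D_imp_scr[OF r] by (simp add: self_conj_recip_def)
  qed
  have p2: "poly_ord f \<in> Dset q n \<longleftrightarrow>
      (\<exists>d \<in> Dset q n. \<exists>\<beta>::'b. primitive_root_of_unity d \<beta> \<and> P f = f_beta q n \<beta>)"
  proof
    assume "poly_ord f \<in> Dset q n"
    moreover have "primitive_root_of_unity (ordb \<beta>) \<beta>" using b0 by (simp add: primitive_iff_ordb)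
    ultimately show "\<exists>d \<in> Dset q n. \<exists>\<beta>::'b. primitive_root_of_unity d \<beta> \<and> P f = f_beta q n \<beta>"
      using po fb by auto
  next
    assume "\<exists>d \<in> Dset q n. \<exists>\<beta>::'b. primitive_root_of_unity d \<beta> \<and> P f = f_beta q n \<beta>"
    then obtain d \<gamma> where d: "d \<in> Dset q n" and pr: "primitive_root_of_unity d \<gamma>"
      and eq: "P f = f_beta q n \<gamma>" by blast
    have "poly (f_beta q n \<gamma>) \<gamma> = 0"
      unfolding f_beta_def poly_prod using n0 by (intro prod_zero) (auto intro: bexI[of _ 0])
    then have r2: "poly (P f) \<gamma> = 0" using eq by simp
    have "poly_ord f = d" using poly_ord_eq[OF r2] pr by (simp add: primitive_iff_ordb)
    then show "poly_ord f \<in> Dset q n" using d by simp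
  qed
  show ?thesis using p1 p2 by blast
qed

end

theorem mainTheorem9:
  fixes q n :: nat
    and f :: "'a::{field,finite} poly"
    and \<phi> :: "'a \<Rightarrow> 'b::{field,finite}"
  assumes "prime_power q"
    and "card (UNIV :: 'a set) = q ^ 2"
    and "card (UNIV :: 'b set) = q ^ (2 * n)"
    and "\<forall>x y. \<phi> (x + y) = \<phi> x + \<phi> y"
    and "\<forall>x y. \<phi> (x * y) = \<phi> x * \<phi> y"
    and "\<phi> 1 = 1"
    and "odd n" and "n \<ge> 3"
    and "irreducible f" and "lead_coeff f = 1" and "degree f = n"
  shows "(self_conj_recip q f \<longleftrightarrow> poly_ord f \<in> Dset q n) \<and>
         (poly_ord f \<in> Dset q n \<longleftrightarrow>
            (\<exists>d \<in> Dset q n. \<exists>\<beta>::'b. primitive_root_of_unity d \<beta> \<and>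
                map_poly \<phi> f = f_beta q n \<beta>))"
proof -
  obtain p k where pk: "prime p" "k > 0" "q = p ^ k"
    using assms(1) by (auto simp: prime_power_def)
  interpret ctx \<phi> q n p k f
    by (unfold_locales) (use assms pk in auto)
  show ?thesis by (rule main_ctx)
qed

end
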